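(* Let $\mathbb{H}$ be a finite-dimensional complex Hilbert space and let $t\mapsto H(t)$ be a continuous family of self-adjoint operators on $\mathbb{H}$ with propagator $\{U(t,s)\}$ (unitaries with $U(t,t)=I$, $U(t,r)U(r,s)=U(t,s)$, $\mathrm{i}\frac{d}{dt}U(t,s)=H(t)U(t,s)$). Let $X_0=\sum_{j=1}^n\lambda_jE_j$ be self-adjoint with distinct eigenvalues $\lambda_j$ and spectral projections $E_j$, and suppose $T>0$ satisfies $U(0,T)E_jU(T,0)=E_j$ for all $j$. For each $j$ let $d_j=\dim E_j[\mathbb{H}]$, $\{\psi^{(j)}_k\}_{k=1}^{d_j}$ an orthonormal basis of $E_j[\mathbb{H}]$, $\psi^{(j)}_k(t)=U(0,t)\psi^{(j)}_k$, $\mathbb{H}_j(t)=U(0,t)E_jU(t,0)[\mathbb{H}]$, $C_j(t)=[\langle\psi^{(j)}_m,H(t)\psi^{(j)}_k\rangle]_{m,k}$, $\tilde V_j(t)=[\tilde v^{(j)}_{mk}(t)]$ the solution of $\mathrm{i}\frac{d}{dt}\tilde V_j=C_j\tilde V_j$, $\tilde V_j(0)=I_{d_j}$, $\tilde\psi^{(j)}_k(t)=\sum_m\tilde v^{(j)}_{mk}(t)\psi^{(j)}_m(t)$, and $G_j=[g^{(j)}_{mk}]_{m,k=1}^{d_j}$ with $g^{(j)}_{mk}=\langle\psi^{(j)}_m,\tilde\psi^{(j)}_k(T)\rangle$. Then for each $1\le j\le n$, $G_j$ is a $d_j\times d_j$ unitary matrix, and for any family $\{\bar\psi^{(j)}_k(t):1\le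 k\le d_j\}$, $t\in[0,T]$, such that for each $t$ it is an orthonormal basis of $\mathbb{H}_j(t)$, each $t\mapsto\bar\psi^{(j)}_k(t)$ is continuously differentiable on $[0,T]$, and $\bar\psi^{(j)}_k(T)=\bar\psi^{(j)}_k(0)=\psi^{(j)}_k$, one has $$G_j=I_{d_j}+\sum_{m=1}^\infty \mathrm{i}^m\int_0^T\int_0^{t_1}\cdots\int_0^{t_{m-1}}A_j(t_1)\cdots A_j(t_m)\,dt_m\cdots dt_1,$$ where $A_j(t)=[a^{(j)}_{mk}(t)]_{m,k=1}^{d_j}$ with $a^{(j)}_{mk}(t)=\mathrm{i}\langle\bar\psi^{(j)}_m(t),\frac{d}{dt}\bar\psi^{(j)}_k(t)\rangle$. In particular $G_j$ is independent of the Hamiltonian $H(t)$ and depends only on the loop of subspaces $[0,T]\ni t\mapsto\mathbb{H}_j(t)$.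
   Context: Inner products are linear in the second argument. $G_j$ is called the $j$-th non-Abelian observable-geometric phase of the cyclic observable evolution $X(t)=U(0,t)X_0U(t,0)$. *)

theory Defs
  imports "HOL-Analysis.Analysis"
begin

text \<open>The finite-dimensional complex Hilbert space is modelled as complex^'n
  (with 'n a finite index type); operators on it are matrices complex^'n^'n.
  The inner product is conjugate-linear in the first and linear in the second argument.\<close>

definition cinner :: "complex^'n \<Rightarrow> complex^'n \<Rightarrow> complex" where
  "cinner x y = (\<Sum>i\<in>UNIV. cnj (x$i) * y$i)"

definition adj :: "complex^'n^'n \<Rightarrow> complex^'n^'n" where
  "adj A = (\<chi> i j. cnj (A$j$i))"

definition cmat_scale :: "complex \<Rightarrow> complex^'n^'n \<Rightarrow> complex^'n^'n" where
  "cmat_scale c A = (\<chi> i j. c * A$i$j)"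

definition self_adjoint :: "complex^'n^'n \<Rightarrow> bool" where
  "self_adjoint A \<longleftrightarrow> adj A = A"

definition unitary_op :: "complex^'n^'n \<Rightarrow> bool" where
  "unitary_op U \<longleftrightarrow> adj U ** U = mat 1 \<and> U ** adj U = mat 1"

definition op_range :: "complex^'n^'n \<Rightarrow> (complex^'n) set" where
  "op_range M = range (\<lambda>x. M *v x)"

definition is_onb :: "nat \<Rightarrow> (nat \<Rightarrow> complex^'n) \<Rightarrow> (complex^'n) set \<Rightarrow> bool" where
  "is_onb d phi S \<longleftrightarrow>
     (\<forall>k<d. phi k \<in> S) \<and>
     (\<forall>m<d. \<forall>k<d. cinner (phi m) (phi k) = (if m = k then 1 else 0)) \<and>
     (\<forall>x\<in>S. \<exists>c. x = (\<Sum>k<d. c k *s phi k))"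

text \<open>d x d complex matrices are represented as functions nat => nat => complex
  (only the entries with indices < d matter).\<close>

definition unitary_sq :: "nat \<Rightarrow> (nat \<Rightarrow> nat \<Rightarrow> complex) \<Rightarrow> bool" where
  "unitary_sq d G \<longleftrightarrow>
     (\<forall>m<d. \<forall>k<d. (\<Sum>l<d. cnj (G l m) * G l k) = (if m = k then 1 else 0)) \<and>
     (\<forall>m<d. \<forall>k<d. (\<Sum>l<d. G m l * cnj (G k l)) = (if m = k then 1 else 0))"

text \<open>Iterated (time-ordered) integrals:
  dyson_iter A d 0 t = I, and
  dyson_iter A d (Suc m) t = int_0^t A(t1) * dyson_iter A d m t1 dt1, so that
  dyson_iter A d m T = int_0^T int_0^{t1} ... int_0^{t_{m-1}} A(t1)...A(tm) dtm ... dt1.\<close>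
fun dyson_iter :: "(real \<Rightarrow> nat \<Rightarrow> nat \<Rightarrow> complex) \<Rightarrow> nat \<Rightarrow> nat \<Rightarrow> real \<Rightarrow> nat \<Rightarrow> nat \<Rightarrow> complex" where
  "dyson_iter A d 0 t = (\<lambda>a b. if a = b then 1 else 0)"
| "dyson_iter A d (Suc m) t =
     (\<lambda>a b. integral {0..t} (\<lambda>t1. \<Sum>l<d. A t1 a l * dyson_iter A d m t1 l b))"

end

theory Submission
  imports Defs
begin



lemma norm_vec_le_sum: "norm (x::'a::real_normed_vector^'n) \<le> (\<Sum>i\<in>UNIV. norm (x$i))"
  unfolding norm_vec_def by (rule L2_set_le_sum) auto

lemma bb_cinner: "bounded_bilinear (cinner :: complex^'n \<Rightarrow> complex^'n \<Rightarrow> complex)"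
proof
  fix a a' b b' :: "complex^'n" and r :: real
  show "cinner (a + a') b = cinner a b + cinner a' b"
    by (simp add: cinner_def distrib_right sum.distrib)
  show "cinner a (b + b') = cinner a b + cinner a b'"
    by (simp add: cinner_def distrib_left sum.distrib)
  show "cinner (r *\<^sub>R a) b = r *\<^sub>R cinner a b"
    unfolding cinner_def vector_scaleR_component by (simp add: scaleR_conv_of_real sum_distrib_left mult.assoc)
  show "cinner a (r *\<^sub>R b) = r *\<^sub>R cinner a b"
    unfolding cinner_def vector_scaleR_component by (simp add: scaleR_conv_of_real sum_distrib_left algebra_simps)
next
  show "\<exists>K. \<forall>a b. norm (cinner (a::complex^'n) b) \<le> norm a * norm b * K"
  proof (intro exI allI)
    fix a b :: "complex^'n"
    have "norm (cinner a b) \<le> (\<Sum>i\<in>UNIV. norm (cnj (a$i) * b$i))"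
      unfolding cinner_def by (rule norm_sum)
    also have "\<dots> \<le> (\<Sum>i\<in>(UNIV::'n set). norm a * norm b)"
      by (intro sum_mono) (simp add: norm_mult mult_mono Finite_Cartesian_Product.norm_nth_le)
    also have "\<dots> = norm a * norm b * real CARD('n)" by simp
    finally show "norm (cinner a b) \<le> norm a * norm b * real CARD('n)" .
  qed
qed

lemma bb_mv: "bounded_bilinear (\<lambda>(M::complex^'n^'n) (x::complex^'n). M *v x)"
proof
  fix M M' :: "complex^'n^'n" and x x' :: "complex^'n" and r :: real
  show "(M + M') *v x = M *v x + M' *v x"
    by (simp add: vec_eq_iff matrix_vector_mult_def distrib_right sum.distrib)
  show "M *v (x + x') = M *v x + M *v x'"
    by (simp add: vec_eq_iff matrix_vector_mult_def distrib_left sum.distrib)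
  show "(r *\<^sub>R M) *v x = r *\<^sub>R (M *v x)"
    unfolding vec_eq_iff matrix_vector_mult_def vector_scaleR_component by (simp add: scaleR_conv_of_real sum_distrib_left mult.assoc)
  show "M *v (r *\<^sub>R x) = r *\<^sub>R (M *v x)"
    unfolding vec_eq_iff matrix_vector_mult_def vector_scaleR_component by (simp add: scaleR_conv_of_real sum_distrib_left algebra_simps)
next
  show "\<exists>K. \<forall>(M::complex^'n^'n) (x::complex^'n). norm (M *v x) \<le> norm M * norm x * K"
  proof (intro exI allI)
    fix M :: "complex^'n^'n" and x :: "complex^'n"
    have "norm (M *v x) \<le> (\<Sum>i\<in>UNIV. norm ((M *v x)$i))" by (rule norm_vec_le_sum)
    also have "\<dots> \<le> (\<Sum>i\<in>(UNIV::'n set). \<Sum>j\<in>(UNIV::'n set). norm M * norm x)"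
    proof (intro sum_mono)
      fix i
      have "norm ((M *v x)$i) \<le> (\<Sum>j\<in>UNIV. norm (M$i$j * x$j))"
        unfolding matrix_vector_mult_def by (simp add: norm_sum)
      also have "\<dots> \<le> (\<Sum>j\<in>(UNIV::'n set). norm M * norm x)"
      proof (intro sum_mono)
        fix j
        have "norm (M$i$j) \<le> norm M" using Finite_Cartesian_Product.norm_nth_le[where x="M$i" and i=j] Finite_Cartesian_Product.norm_nth_le[where x=M and i=i] by linarith
        then show "norm (M$i$j * x$j) \<le> norm M * norm x"
          by (simp add: norm_mult mult_mono Finite_Cartesian_Product.norm_nth_le)
      qed
      finally show "norm ((M *v x)$i) \<le> (\<Sum>j\<in>(UNIV::'n set). norm M * norm x)" .
    qed
    also have "\<dots> = norm M * norm x * (real CARD('n) * real CARD('n))" by simp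
    finally show "norm (M *v x) \<le> norm M * norm x * (real CARD('n) * real CARD('n))" .
  qed
qed

lemmas cinner_sum_right = bounded_bilinear.sum_right[OF bb_cinner]
lemmas cinner_sum_left = bounded_bilinear.sum_left[OF bb_cinner]
lemmas cinner_zero_left[simp] = bounded_bilinear.zero_left[OF bb_cinner]
lemmas cinner_zero_right[simp] = bounded_bilinear.zero_right[OF bb_cinner]
lemmas cinner_add_left = bounded_bilinear.add_left[OF bb_cinner]
lemmas cinner_add_right = bounded_bilinear.add_right[OF bb_cinner]
lemmas cinner_diff_left = bounded_bilinear.diff_left[OF bb_cinner]
lemmas cinner_diff_right = bounded_bilinear.diff_right[OF bb_cinner]
lemmas cinner_minus_left = bounded_bilinear.minus_left[OF bb_cinner]
lemmas mv_sum_right = bounded_bilinear.sum_right[OF bb_mv]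

lemma cinner_scaleC_right[simp]: "cinner x (c *s y) = c * cinner x y"
  by (simp add: cinner_def sum_distrib_left algebra_simps)

lemma cinner_scaleC_left[simp]: "cinner (c *s x) y = cnj c * cinner x y"
  by (simp add: cinner_def sum_distrib_left algebra_simps)

lemma cinner_cnj: "cnj (cinner x y) = cinner y x"
  by (simp add: cinner_def mult.commute)

lemma cinner_mv_left: "cinner (M *v x) y = cinner x (adj M *v y)"
proof -
  have "cinner (M *v x) y = (\<Sum>i\<in>UNIV. \<Sum>j\<in>UNIV. cnj (M$i$j) * cnj (x$j) * y$i)"
    unfolding cinner_def matrix_vector_mult_def by (simp add: sum_distrib_right)
  also have "\<dots> = (\<Sum>j\<in>UNIV. \<Sum>i\<in>UNIV. cnj (M$i$j) * cnj (x$j) * y$i)"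
    by (rule sum.swap)
  also have "\<dots> = cinner x (adj M *v y)"
    unfolding cinner_def matrix_vector_mult_def adj_def by (simp add: sum_distrib_left mult_ac)
  finally show ?thesis .
qed

lemma adj_adj[simp]: "adj (adj M) = M"
  by (simp add: adj_def vec_eq_iff)

lemma cinner_mv_right: "cinner x (M *v y) = cinner (adj M *v x) y"
  using cinner_mv_left[of "adj M" x y] by simp

lemma mv_scaleC: "(M::complex^'n^'n) *v (c *s x) = c *s (M *v x)"
  unfolding vec_eq_iff matrix_vector_mult_def by (auto simp: sum_distrib_left mult.left_commute intro!: sum.cong)

lemma cmat_scale_mv: "cmat_scale c M *v x = c *s (M *v x)"
  by (simp add: vec_eq_iff matrix_vector_mult_def cmat_scale_def sum_distrib_left algebra_simps)

lemma cmat_scale_cancel: "cmat_scale (-\<i>) (cmat_scale \<i> X) = X"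
  by (simp add: vec_eq_iff cmat_scale_def)

lemma cinner_unitary: "adj M ** M = mat 1 \<Longrightarrow> cinner (M *v x) (M *v y) = cinner x y"
  by (simp add: cinner_mv_left matrix_vector_mul_assoc)

lemma onb_expand:
  assumes "is_onb d \<phi> S" "x \<in> S"
  shows "x = (\<Sum>k<d. cinner (\<phi> k) x *s \<phi> k)"
proof -
  from assms obtain c where c: "x = (\<Sum>k<d. c k *s \<phi> k)" unfolding is_onb_def by blast
  have "cinner (\<phi> m) x = c m" if "m < d" for m
  proof -
    have orth: "\<forall>m<d. \<forall>k<d. cinner (\<phi> m) (\<phi> k) = (if m = k then 1 else 0)"
      using assms(1) unfolding is_onb_def by blast
    have "cinner (\<phi> m) x = (\<Sum>k<d. c k * cinner (\<phi> m) (\<phi> k))"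
      unfolding c by (simp add: cinner_sum_right)
    also have "\<dots> = (\<Sum>k<d. if k = m then c k else 0)"
      using orth that by (intro sum.cong) auto
    also have "\<dots> = c m" using that by simp
    finally show ?thesis .
  qed
  then have "(\<Sum>k<d. c k *s \<phi> k) = (\<Sum>k<d. cinner (\<phi> k) x *s \<phi> k)"
    by (intro sum.cong) auto
  then show ?thesis using c by simp
qed

lemma onb_parseval_r:
  assumes "is_onb d \<phi> S" "x \<in> S"
  shows "cinner y x = (\<Sum>k<d. cinner y (\<phi> k) * cinner (\<phi> k) x)"
proof -
  have "cinner y x = cinner y (\<Sum>k<d. cinner (\<phi> k) x *s \<phi> k)"
    using onb_expand[OF assms] by (rule arg_cong)
  also have "\<dots> = (\<Sum>k<d. cinner y (\<phi> k) * cinner (\<phi> k) x)"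
    by (simp add: cinner_sum_right mult.commute)
  finally show ?thesis .
qed

lemma onb_parseval_l:
  assumes "is_onb d \<phi> S" "x \<in> S"
  shows "cinner x y = (\<Sum>k<d. cinner x (\<phi> k) * cinner (\<phi> k) y)"
proof -
  have "cinner x y = cnj (cinner y x)" by (simp add: cinner_cnj)
  also have "\<dots> = cnj (\<Sum>k<d. cinner y (\<phi> k) * cinner (\<phi> k) x)"
    using onb_parseval_r[OF assms] by (rule arg_cong)
  also have "\<dots> = (\<Sum>k<d. cinner x (\<phi> k) * cinner (\<phi> k) y)"
    by (simp add: cinner_cnj mult.commute)
  finally show ?thesis .
qed



lemma col_to_row:
  fixes G :: "nat \<Rightarrow> nat \<Rightarrow> complex"
  assumes col: "\<forall>m<d. \<forall>k<d. (\<Sum>l<d. cnj (G l m) * G l k) = (if m = k then 1 else 0)"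
  shows "\<forall>m<d. \<forall>k<d. (\<Sum>l<d. G m l * cnj (G k l)) = (if m = k then 1 else 0)"
proof -
  define P where "P i k = (\<Sum>a<d. G i a * cnj (G k a))" for i k
  define Q where "Q i k = (if i = k then 1 else 0) - P i k" for i k
  have PP: "(\<Sum>l<d. P i l * P l k) = P i k" for i k
  proof -
    have "(\<Sum>l<d. P i l * P l k) = (\<Sum>l<d. \<Sum>a<d. \<Sum>b<d. G i a * cnj (G l a) * (G l b * cnj (G k b)))"
      unfolding P_def by (simp only: sum_product)
    also have "\<dots> = (\<Sum>l<d. \<Sum>a<d. \<Sum>b<d. G i a * cnj (G k b) * (cnj (G l a) * G l b))"
      by (intro sum.cong refl) (simp add: mult_ac)
    also have "\<dots> = (\<Sum>a<d. \<Sum>l<d. \<Sum>b<d. G i a * cnj (G k b) * (cnj (G l a) * G l b))"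
      by (rule sum.swap)
    also have "\<dots> = (\<Sum>a<d. \<Sum>b<d. \<Sum>l<d. G i a * cnj (G k b) * (cnj (G l a) * G l b))"
      by (rule sum.cong[OF refl], rule sum.swap)
    also have "\<dots> = (\<Sum>a<d. \<Sum>b<d. G i a * cnj (G k b) * (\<Sum>l<d. cnj (G l a) * G l b))"
      by (simp add: sum_distrib_left)
    also have "\<dots> = (\<Sum>a<d. \<Sum>b<d. if b = a then G i a * cnj (G k b) else 0)"
      using col by (intro sum.cong refl) auto
    also have "\<dots> = P i k" unfolding P_def by simp
    finally show ?thesis .
  qed
  have herm: "cnj (P i k) = P k i" for i k
    unfolding P_def by (simp add: mult.commute)
  have QQ: "(\<Sum>l<d. Q i l * Q l k) = Q i k" if "i < d" "k < d" for i k
  proof -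
    have e: "Q i l * Q l k = ((if l = i then (if i = k then 1 else 0) else 0) - (if l = i then P l k else 0))
        - (if l = k then P i l else 0) + P i l * P l k" for l
      unfolding Q_def by (auto simp: algebra_simps)
    have "(\<Sum>l<d. Q i l * Q l k) = (\<Sum>l<d. (if l = i then (if i = k then 1 else 0) else 0)) - (\<Sum>l<d. (if l = i then P l k else 0))
        - (\<Sum>l<d. (if l = k then P i l else 0)) + (\<Sum>l<d. P i l * P l k)"
      unfolding e by (simp only: sum.distrib sum_subtractf)
    also have "\<dots> = Q i k" using that unfolding Q_def PP by simp
    finally show ?thesis .
  qed
  have Qii: "Q i i = (\<Sum>l<d. of_real ((cmod (Q i l))^2))" if "i < d" for i
  proof -
    have "Q i i = (\<Sum>l<d. Q i l * Q l i)" using QQ[OF that that] by simp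
    also have "\<dots> = (\<Sum>l<d. Q i l * cnj (Q i l))"
      unfolding Q_def by (intro sum.cong refl) (auto simp: herm)
    also have "\<dots> = (\<Sum>l<d. of_real ((cmod (Q i l))^2))"
      by (intro sum.cong refl) (metis complex_norm_square)
    finally show ?thesis .
  qed
  have tr: "(\<Sum>i<d. Q i i) = 0"
  proof -
    have "(\<Sum>i<d. P i i) = (\<Sum>a<d. \<Sum>i<d. cnj (G i a) * G i a)"
      unfolding P_def by (subst sum.swap) (simp add: mult.commute)
    also have "\<dots> = (\<Sum>a<d. 1)" using col by (intro sum.cong refl) auto
    finally have "(\<Sum>i<d. P i i) = of_nat d" by simp
    then show ?thesis unfolding Q_def by (simp add: sum_subtractf)
  qed
  have "(\<Sum>i<d. \<Sum>l<d. of_real ((cmod (Q i l))^2)) = (0::complex)"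
    using tr Qii by simp
  then have "(\<Sum>i<d. \<Sum>l<d. (cmod (Q i l))^2) = 0"
    by (metis (no_types, lifting) of_real_eq_0_iff of_real_sum sum.cong)
  then have "\<forall>i\<in>{..<d}. (\<Sum>l<d. (cmod (Q i l))^2) = 0"
    by (subst (asm) sum_nonneg_eq_0_iff) (auto intro!: sum_nonneg)
  then have "\<forall>i<d. \<forall>l<d. Q i l = 0"
    by (auto simp: sum_nonneg_eq_0_iff)
  then show ?thesis unfolding Q_def P_def by (auto split: if_splits simp: right_minus_eq)
qed



lemma power_has_integral:
  assumes "0 \<le> t"
  shows "((\<lambda>s::real. s^N) has_integral t^(Suc N) / real (Suc N)) {0..t}"
proof -
  have "((\<lambda>s::real. s^N) has_integral (t^(Suc N) / real (Suc N) - 0^(Suc N) / real (Suc N))) {0..t}"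
  proof (rule fundamental_theorem_of_calculus[OF assms])
    fix x :: real assume "x \<in> {0..t}"
    have "((\<lambda>s::real. s^(Suc N) / real (Suc N)) has_real_derivative x^N) (at x)"
      by (auto intro!: derivative_eq_intros simp del: power_Suc)
    then show "((\<lambda>s::real. s^(Suc N) / real (Suc N)) has_vector_derivative x^N) (at x within {0..t})"
      by (simp add: has_real_derivative_iff_has_vector_derivative has_vector_derivative_at_within)
  qed
  then show ?thesis by simp
qed

lemma dyson_sums:
  fixes A w :: "real \<Rightarrow> nat \<Rightarrow> nat \<Rightarrow> complex"
  assumes T: "0 \<le> T"
    and contA: "\<And>a b. a < d \<Longrightarrow> b < d \<Longrightarrow> continuous_on {0..T} (\<lambda>t. A t a b)"
    and wd: "\<And>a b t. a < d \<Longrightarrow> b < d \<Longrightarrow> t \<in> {0..T} \<Longrightarrow>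
       ((\<lambda>s. w s a b) has_vector_derivative (\<Sum>l<d. \<i> * A t a l * w t l b)) (at t within {0..T})"
    and w0: "\<And>a b. a < d \<Longrightarrow> b < d \<Longrightarrow> w 0 a b = (if a = b then 1 else 0)"
    and ab: "a0 < d" "b0 < d"
  shows "(\<lambda>m. \<i>^m * dyson_iter A d m T a0 b0) sums w T a0 b0"
proof -
  let ?D = "dyson_iter A d"
  have contw: "continuous_on {0..T} (\<lambda>t. w t a b)" if "a < d" "b < d" for a b
    unfolding continuous_on_eq_continuous_within
    using wd[OF that] has_vector_derivative_continuous by blast
  have contD: "continuous_on {0..T} (\<lambda>t. ?D m t a b)" if "a < d" "b < d" for m a b
    using that
  proof (induction m arbitrary: a b)
    case 0 then show ?case by simp
  next
    case (Suc m)
    have "continuous_on {0..T} (\<lambda>t1. \<Sum>l<d. A t1 a l * ?D m t1 l b)"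
      using Suc by (intro continuous_intros contA) auto
    then have "(\<lambda>t1. \<Sum>l<d. A t1 a l * ?D m t1 l b) integrable_on {0..T}"
      by (rule integrable_continuous_interval)
    then show ?case using indefinite_integral_continuous_1 by simp
  qed
  have integ: "f integrable_on {0..t}" if "t \<in> {0..T}" "continuous_on {0..T} f" for f :: "real \<Rightarrow> complex" and t
    using that by (intro integrable_continuous_interval) (auto elim: continuous_on_subset)
  have ftc: "w t a b = (if a = b then 1 else 0) + \<i> * integral {0..t} (\<lambda>s. \<Sum>l<d. A s a l * w s l b)"
    if t: "t \<in> {0..T}" and a: "a < d" and b: "b < d" for t a b
  proof -
    have "((\<lambda>s. \<Sum>l<d. \<i> * A s a l * w s l b) has_integral (w t a b - w 0 a b)) {0..t}"
      using t by (intro fundamental_theorem_of_calculus)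
        (auto intro: has_vector_derivative_within_subset[OF wd[OF a b]])
    then have "integral {0..t} (\<lambda>s. \<i> * (\<Sum>l<d. A s a l * w s l b)) = w t a b - w 0 a b"
      by (simp add: sum_distrib_left mult.assoc integral_unique)
    then show ?thesis using w0[OF a b] by (simp add: integral_mult_right algebra_simps)
  qed
  define S where "S N t a b = (\<Sum>m<N. \<i>^m * ?D m t a b)" for N t a b
  have contS: "continuous_on {0..T} (\<lambda>t. S N t a b)" if "a < d" "b < d" for N a b
    unfolding S_def using that by (intro continuous_intros contD)
  have Sstep: "S (Suc N) t a b = (if a = b then 1 else 0) + \<i> * integral {0..t} (\<lambda>s. \<Sum>l<d. A s a l * S N s l b)"
    if t: "t \<in> {0..T}" and a: "a < d" and b: "b < d" for N t a b
  proof -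
    have "S (Suc N) t a b = ?D 0 t a b + (\<Sum>m<N. \<i>^(Suc m) * ?D (Suc m) t a b)"
      unfolding S_def by (subst sum.lessThan_Suc_shift) simp
    also have "(\<Sum>m<N. \<i>^(Suc m) * ?D (Suc m) t a b)
        = \<i> * (\<Sum>m<N. integral {0..t} (\<lambda>s. \<i>^m * (\<Sum>l<d. A s a l * ?D m s l b)))"
    proof -
      have "(\<Sum>m<N. \<i>^(Suc m) * ?D (Suc m) t a b)
        = (\<Sum>m<N. \<i> * integral {0..t} (\<lambda>s. \<i>^m * (\<Sum>l<d. A s a l * ?D m s l b)))"
        by (intro sum.cong refl) (simp only: integral_mult_right dyson_iter.simps power_Suc mult.assoc)
      then show ?thesis by (simp only: sum_distrib_left)
    qed
    also have "(\<Sum>m<N. integral {0..t} (\<lambda>s. \<i>^m * (\<Sum>l<d. A s a l * ?D m s l b)))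
        = integral {0..t} (\<lambda>s. \<Sum>m<N. \<i>^m * (\<Sum>l<d. A s a l * ?D m s l b))"
      by (rule integral_sum[symmetric]) (auto intro!: integ[OF t] continuous_intros contA contD a b)
    also have "(\<lambda>s. \<Sum>m<N. \<i>^m * (\<Sum>l<d. A s a l * ?D m s l b)) = (\<lambda>s. \<Sum>l<d. A s a l * S N s l b)"
      unfolding S_def by (auto simp: sum_distrib_left mult_ac intro: sum.swap)
    finally show ?thesis by simp
  qed
  define Er where "Er N t a b = w t a b - S N t a b" for N t a b
  have contEr: "continuous_on {0..T} (\<lambda>t. Er N t a b)" if "a < d" "b < d" for N a b
    unfolding Er_def using that by (intro continuous_intros contS contw)
  have Erstep: "Er (Suc N) t a b = \<i> * integral {0..t} (\<lambda>s. \<Sum>l<d. A s a l * Er N s l b)"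
    if t: "t \<in> {0..T}" and a: "a < d" and b: "b < d" for N t a b
  proof -
    have "integral {0..t} (\<lambda>s. \<Sum>l<d. A s a l * Er N s l b)
      = integral {0..t} (\<lambda>s. (\<Sum>l<d. A s a l * w s l b) - (\<Sum>l<d. A s a l * S N s l b))"
      unfolding Er_def by (simp add: right_diff_distrib sum_subtractf)
    also have "\<dots> = integral {0..t} (\<lambda>s. \<Sum>l<d. A s a l * w s l b) - integral {0..t} (\<lambda>s. \<Sum>l<d. A s a l * S N s l b)"
      by (rule integral_diff) (auto intro!: integ[OF t] continuous_intros contA contS contw a b)
    finally have I: "integral {0..t} (\<lambda>s. \<Sum>l<d. A s a l * Er N s l b)
      = integral {0..t} (\<lambda>s. \<Sum>l<d. A s a l * w s l b) - integral {0..t} (\<lambda>s. \<Sum>l<d. A s a l * S N s l b)" .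
    have "Er (Suc N) t a b = \<i> * (integral {0..t} (\<lambda>s. \<Sum>l<d. A s a l * w s l b) - integral {0..t} (\<lambda>s. \<Sum>l<d. A s a l * S N s l b))"
      unfolding Er_def ftc[OF t a b] Sstep[OF t a b, of N] by (simp add: algebra_simps)
    then show ?thesis using I by simp
  qed
  have bnd: "\<exists>B\<ge>0. \<forall>t\<in>{0..T}. \<forall>a<d. \<forall>b<d. norm (f t a b) \<le> B"
    if cf: "\<And>a b. a < d \<Longrightarrow> b < d \<Longrightarrow> continuous_on {0..T} (\<lambda>t. f t a b)" for f :: "real \<Rightarrow> nat \<Rightarrow> nat \<Rightarrow> complex"
  proof -
    have "continuous_on {0..T} (\<lambda>t. \<Sum>a<d. \<Sum>b<d. norm (f t a b))"
      by (intro continuous_intros cf) auto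
    then obtain B where B: "0 \<le> B" "\<And>t. t \<in> {0..T} \<Longrightarrow> norm (\<Sum>a<d. \<Sum>b<d. norm (f t a b)) \<le> B"
      by (rule continuous_on_compact_bound[OF compact_Icc]) blast
    have "norm (f t a b) \<le> B" if "t \<in> {0..T}" "a < d" "b < d" for t a b
    proof -
      have "norm (f t a b) \<le> (\<Sum>b'<d. norm (f t a b'))"
        using that by (intro member_le_sum) auto
      also have "\<dots> \<le> (\<Sum>a'<d. \<Sum>b'<d. norm (f t a' b'))"
        using that by (intro member_le_sum[where f="\<lambda>a'. \<Sum>b'<d. norm (f t a' b')"]) (auto intro: sum_nonneg)
      also have "\<dots> \<le> B" using B(2)[OF that(1)] by simp
      finally show ?thesis .
    qed
    then show ?thesis using B(1) by blast
  qed
  obtain K where K: "K \<ge> 0" "\<And>t a b. t \<in> {0..T} \<Longrightarrow> a < d \<Longrightarrow> b < d \<Longrightarrow> norm (w t a b) \<le> K"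
    using bnd[of w] contw by blast
  obtain L where L: "L \<ge> 0" "\<And>t a b. t \<in> {0..T} \<Longrightarrow> a < d \<Longrightarrow> b < d \<Longrightarrow> norm (A t a b) \<le> L"
    using bnd[of A] contA by blast
  have Erbound: "norm (Er N t a b) \<le> K * (d * L)^N * t^N / fact N"
    if "t \<in> {0..T}" "a < d" "b < d" for N t a b
    using that
  proof (induction N arbitrary: t a b)
    case 0
    then show ?case using K by (simp add: Er_def S_def)
  next
    case (Suc N)
    note t = Suc.prems(1) and a = Suc.prems(2) and b = Suc.prems(3)
    have t0: "0 \<le> t" using t by simp
    let ?g = "\<lambda>s. \<Sum>l<d. A s a l * Er N s l b"
    let ?c = "real d * L * (K * (real d * L)^N / fact N)"
    have "norm (Er (Suc N) t a b) = norm (integral {0..t} ?g)"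
      using Erstep[OF t a b] by (simp add: norm_mult)
    also have "\<dots> \<le> integral {0..t} (\<lambda>s. ?c * s^N)"
    proof (rule integral_norm_bound_integral)
      show "?g integrable_on {0..t}"
        by (auto intro!: integ[OF t] continuous_intros contA contEr a b)
      show "(\<lambda>s. ?c * s^N) integrable_on {0..t}"
        by (intro integrable_continuous_interval continuous_intros)
      fix s assume s: "s \<in> {0..t}"
      then have sT: "s \<in> {0..T}" using t by auto
      have "norm (?g s) \<le> (\<Sum>l<d. norm (A s a l) * norm (Er N s l b))"
        by (rule order_trans[OF norm_sum]) (simp add: norm_mult)
      also have "\<dots> \<le> (\<Sum>l<(d::nat). L * (K * (real d * L)^N * s^N / fact N))"
        using Suc.IH[OF sT _ b] L(2)[OF sT a] L(1) by (intro sum_mono mult_mono) auto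
      also have "\<dots> = ?c * s^N" by (simp add: algebra_simps)
      finally show "norm (?g s) \<le> ?c * s^N" .
    qed
    also have "\<dots> = ?c * (t^(Suc N) / real (Suc N))"
      using integral_unique[OF power_has_integral[OF t0, of N]] by (simp add: integral_mult_right)
    also have "\<dots> = K * (real d * L)^(Suc N) * t^(Suc N) / fact (Suc N)"
      by (simp add: field_simps)
    finally show ?case .
  qed
  have lim0: "(\<lambda>N. Er N T a0 b0) \<longlonglongrightarrow> 0"
  proof (rule Lim_null_comparison)
    show "\<forall>\<^sub>F N in sequentially. norm (Er N T a0 b0) \<le> K * ((real d * L * T)^N /\<^sub>R fact N)"
    proof (rule always_eventually, rule allI)
      fix N
      have "norm (Er N T a0 b0) \<le> K * (real d * L)^N * T^N / fact N" using Erbound ab T by simp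
      also have "\<dots> = K * ((real d * L * T)^N /\<^sub>R fact N)"
        by (simp add: power_mult_distrib divide_inverse mult_ac)
      finally show "norm (Er N T a0 b0) \<le> K * ((real d * L * T)^N /\<^sub>R fact N)" .
    qed
    have "(\<lambda>N. (real d * L * T)^N /\<^sub>R fact N) \<longlonglongrightarrow> 0"
      by (rule summable_LIMSEQ_zero[OF summable_exp_generic])
    then show "(\<lambda>N. K * ((real d * L * T)^N /\<^sub>R fact N)) \<longlonglongrightarrow> 0"
      using tendsto_mult_right_zero by blast
  qed
  have "(\<lambda>N. S N T a0 b0) \<longlonglongrightarrow> w T a0 b0"
  proof (rule LIM_zero_cancel)
    have "(\<lambda>N. - Er N T a0 b0) \<longlonglongrightarrow> - 0" by (rule tendsto_minus[OF lim0])
    then show "(\<lambda>N. S N T a0 b0 - w T a0 b0) \<longlonglongrightarrow> 0" by (simp add: Er_def)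
  qed
  then show ?thesis unfolding sums_def S_def .
qed


lemma op_range_proj: "M ** M = M \<Longrightarrow> x \<in> op_range M \<longleftrightarrow> M *v x = x"
  unfolding op_range_def
  by (auto simp: matrix_vector_mul_assoc) (metis rangeI)

lemma op_rangeI: "x = M *v y \<Longrightarrow> x \<in> op_range M"
  unfolding op_range_def by auto

lemma onb_coef:
  assumes "is_onb d \<phi> S" "k < d"
  shows "cinner (\<phi> k) (\<Sum>l<d. c l *s \<phi> l) = c k"
proof -
  have orth: "\<forall>m<d. \<forall>k<d. cinner (\<phi> m) (\<phi> k) = (if m = k then 1 else 0)"
    using assms(1) unfolding is_onb_def by blast
  have "cinner (\<phi> k) (\<Sum>l<d. c l *s \<phi> l) = (\<Sum>l<d. c l * cinner (\<phi> k) (\<phi> l))"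
    by (simp add: cinner_sum_right)
  also have "\<dots> = (\<Sum>l<d. if l = k then c l else 0)"
    using orth assms(2) by (intro sum.cong) auto
  also have "\<dots> = c k" using assms(2) by simp
  finally show ?thesis .
qed

lemma adj_from_inv:
  assumes "adj A ** A = mat 1" "A ** B = mat 1"
  shows "adj A = B"
proof -
  have "adj A = adj A ** (A ** B)" using assms(2) by (simp add: matrix_mul_rid)
  also have "\<dots> = (adj A ** A) ** B" by (simp add: matrix_mul_assoc)
  also have "\<dots> = B" using assms(1) by (simp add: matrix_mul_lid)
  finally show ?thesis .
qed



theorem proposition2p3:
  fixes H :: "real \<Rightarrow> complex^'n^'n"
    and U :: "real \<Rightarrow> real \<Rightarrow> complex^'n^'n"
    and X0 :: "complex^'n^'n"
    and n :: nat
    and lam :: "nat \<Rightarrow> real"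
    and E :: "nat \<Rightarrow> complex^'n^'n"
    and T :: real
    and d :: "nat \<Rightarrow> nat"
    and psi :: "nat \<Rightarrow> nat \<Rightarrow> complex^'n"
    and V :: "nat \<Rightarrow> real \<Rightarrow> nat \<Rightarrow> nat \<Rightarrow> complex"
  assumes H_cont: "continuous_on UNIV H"
    and H_sa: "\<forall>t. self_adjoint (H t)"
    and U_unitary: "\<forall>t s. unitary_op (U t s)"
    and U_id: "\<forall>t. U t t = mat 1"
    and U_comp: "\<forall>t r s. U t r ** U r s = U t s"
    and U_deriv: "\<forall>t s. (\<lambda>\<tau>. U \<tau> s) differentiable (at t) \<and>
                   cmat_scale \<i> (vector_derivative (\<lambda>\<tau>. U \<tau> s) (at t)) = H t ** U t s"
    and E_proj: "\<forall>j\<in>{1..n}. E j ** E j = E j \<and> self_adjoint (E j) \<and> E j \<noteq> 0"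
    and E_orth: "\<forall>j\<in>{1..n}. \<forall>k\<in>{1..n}. j \<noteq> k \<longrightarrow> E j ** E k = 0"
    and E_sum: "(\<Sum>j=1..n. E j) = mat 1"
    and lam_distinct: "inj_on lam {1..n}"
    and X0_def: "X0 = (\<Sum>j=1..n. cmat_scale (complex_of_real (lam j)) (E j))"
    and T_pos: "T > 0"
    and cyclic: "\<forall>j\<in>{1..n}. U 0 T ** E j ** U T 0 = E j"
    and psi_onb: "\<forall>j\<in>{1..n}. is_onb (d j) (psi j) (op_range (E j))"
    and V_ode: "\<forall>j\<in>{1..n}. \<forall>t\<in>{0..T}. \<forall>a<d j. \<forall>b<d j.
                  \<exists>D. ((\<lambda>s. V j s a b) has_vector_derivative D) (at t within {0..T}) \<and>
                      \<i> * D = (\<Sum>l<d j. cinner (psi j a) (H t *v psi j l) * V j t l b)"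
    and V_init: "\<forall>j\<in>{1..n}. \<forall>a<d j. \<forall>b<d j. V j 0 a b = (if a = b then 1 else 0)"
  shows "\<forall>j\<in>{1..n}.
    (let G = (\<lambda>a b. cinner (psi j a) (\<Sum>l<d j. V j T l b *s (U 0 T *v psi j l))) in
      unitary_sq (d j) G \<and>
      (\<forall>psibar :: real \<Rightarrow> nat \<Rightarrow> complex^'n.
         (\<forall>t\<in>{0..T}. is_onb (d j) (psibar t) (op_range (U 0 t ** E j ** U t 0))) \<and>
         (\<forall>k<d j. \<exists>D. (\<forall>t\<in>{0..T}. ((\<lambda>s. psibar s k) has_vector_derivative D t) (at t within {0..T}))
                        \<and> continuous_on {0..T} D) \<and>
         (\<forall>k<d j. psibar T k = psi j k \<and> psibar 0 k = psi j k)
         \<longrightarrow>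
         (let A = (\<lambda>t a b. \<i> * cinner (psibar t a)
                     (vector_derivative (\<lambda>s. psibar s b) (at t within {0..T}))) in
          \<forall>a<d j. \<forall>b<d j. (\<lambda>m. \<i> ^ m * dyson_iter A (d j) m T a b) sums G a b)))"
  proof (intro ballI)
  fix j assume j: "j \<in> {1..n}"
  define C where "C t l r = cinner (psi j l) (H t *v psi j r)" for t l r
  define y where "y t k = (\<Sum>l<d j. V j t l k *s psi j l)" for t k
  have onbE: "is_onb (d j) (psi j) (op_range (E j))" using psi_onb j by blast
  have Eproj: "E j ** E j = E j" using E_proj j by blast
  have Uinv1: "U 0 t ** U t 0 = mat 1" for t using U_comp U_id by metis
  have Uinv2: "U t 0 ** U 0 t = mat 1" for t using U_comp U_id by metis
  have Uun: "adj (U t s) ** U t s = mat 1" for t s using U_unitary unfolding unitary_op_def by blast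
  have adjU: "adj (U 0 t) = U t 0" for t by (rule adj_from_inv[OF Uun Uinv1])
  have adjU': "adj (U t 0) = U 0 t" for t by (rule adj_from_inv[OF Uun Uinv2])
  have psiE: "psi j l \<in> op_range (E j)" if "l < d j" for l
    using onbE that unfolding is_onb_def by blast
  have combE: "(\<Sum>l<d j. c l *s psi j l) \<in> op_range (E j)" for c
  proof -
    have "E j *v (\<Sum>l<d j. c l *s psi j l) = (\<Sum>l<d j. c l *s (E j *v psi j l))"
      by (simp add: mv_sum_right mv_scaleC)
    also have "\<dots> = (\<Sum>l<d j. c l *s psi j l)"
      using psiE op_range_proj[OF Eproj] by (intro sum.cong) auto
    finally show ?thesis using op_range_proj[OF Eproj] by blast
  qed
  have yE: "y t k \<in> op_range (E j)" for t k unfolding y_def by (rule combE)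
  have ycoef: "cinner (psi j l) (y t k) = V j t l k" if "l < d j" for t l k
    unfolding y_def by (rule onb_coef[OF onbE that])
  have y0: "y 0 k = psi j k" if "k < d j" for k
  proof -
    have "y 0 k = (\<Sum>l<d j. (if l = k then psi j l else 0))"
      unfolding y_def using V_init j that by (intro sum.cong) auto
    then show ?thesis using that by simp
  qed
  have Cherm: "cnj (C t l r) = C t r l" for t l r
  proof -
    have "cnj (C t l r) = cinner (H t *v psi j r) (psi j l)" unfolding C_def by (rule cinner_cnj)
    also have "\<dots> = cinner (psi j r) (adj (H t) *v psi j l)" by (rule cinner_mv_left)
    also have "\<dots> = C t r l" using H_sa unfolding C_def self_adjoint_def by simp
    finally show ?thesis .
  qed
  have Vd: "((\<lambda>s. V j s a b) has_vector_derivative (- \<i> * (\<Sum>l<d j. C t a l * V j t l b))) (at t within {0..T})"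
    if tab: "t \<in> {0..T}" "a < d j" "b < d j" for t a b
  proof -
    obtain D where D: "((\<lambda>s. V j s a b) has_vector_derivative D) (at t within {0..T})"
      "\<i> * D = (\<Sum>l<d j. C t a l * V j t l b)"
      using V_ode[rule_format, OF j tab(1) tab(2) tab(3)] unfolding C_def by blast
    have "D = - \<i> * (\<i> * D)" by simp
    then show ?thesis using D by simp
  qed
  have Uv1[simp]: "U 0 t *v (U t 0 *v x) = x" for t x by (simp add: matrix_vector_mul_assoc Uinv1)
  have Uv2[simp]: "U t 0 *v (U 0 t *v x) = x" for t x by (simp add: matrix_vector_mul_assoc Uinv2)
  have Ey: "E j *v y t k = y t k" for t k using yE op_range_proj[OF Eproj] by blast
  have cycj: "U 0 T ** E j ** U T 0 = E j" using cyclic j by blast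
  have xT: "U 0 T *v y T b \<in> op_range (E j)" for b
  proof -
    have "E j *v (U 0 T *v y T b) = (U 0 T ** E j ** U T 0) *v (U 0 T *v y T b)" using cycj by simp
    also have "\<dots> = U 0 T *v y T b" by (simp add: matrix_vector_mul_assoc[symmetric] Ey)
    finally show ?thesis using op_range_proj[OF Eproj] by blast
  qed
  define G where "G a b = cinner (psi j a) (U 0 T *v y T b)" for a b
  have Geq: "(\<lambda>a b. cinner (psi j a) (\<Sum>l<d j. V j T l b *s (U 0 T *v psi j l))) = G"
    unfolding G_def y_def by (simp add: mv_sum_right mv_scaleC)
  have VV: "(\<Sum>l<d j. cnj (V j T l a) * V j T l b) = (if a = b then 1 else 0)"
    if a: "a < d j" and b: "b < d j" for a b
  proof -
    have der: "((\<lambda>s. \<Sum>l<d j. cnj (V j s l a) * V j s l b) has_vector_derivative 0) (at t within {0..T})"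
      if t: "t \<in> {0..T}" for t
    proof -
      have d1: "((\<lambda>s. \<Sum>l<d j. cnj (V j s l a) * V j s l b) has_vector_derivative
        (\<Sum>l<d j. cnj (V j t l a) * (- \<i> * (\<Sum>r<d j. C t l r * V j t r b))
           + cnj (- \<i> * (\<Sum>r<d j. C t l r * V j t r a)) * V j t l b)) (at t within {0..T})"
        using t a b
        by (intro has_vector_derivative_sum bounded_bilinear.has_vector_derivative[OF bounded_bilinear_mult]
            has_vector_derivative_cnj Vd) auto
      have e1: "(\<Sum>l<d j. cnj (V j t l a) * (- \<i> * (\<Sum>r<d j. C t l r * V j t r b)))
          = - \<i> * (\<Sum>l<d j. \<Sum>r<d j. cnj (V j t l a) * C t l r * V j t r b)"
        by (simp add: sum_distrib_left mult_ac)
      have e2: "(\<Sum>l<d j. cnj (- \<i> * (\<Sum>r<d j. C t l r * V j t r a)) * V j t l b)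
          = \<i> * (\<Sum>l<d j. \<Sum>r<d j. C t r l * cnj (V j t r a) * V j t l b)"
        by (simp add: Cherm sum_distrib_left sum_distrib_right mult_ac)
      have e3: "(\<Sum>l<d j. \<Sum>r<d j. C t r l * cnj (V j t r a) * V j t l b)
          = (\<Sum>l<d j. \<Sum>r<d j. cnj (V j t l a) * C t l r * V j t r b)"
        by (subst sum.swap) (simp add: mult_ac)
      have "(\<Sum>l<d j. cnj (V j t l a) * (- \<i> * (\<Sum>r<d j. C t l r * V j t r b))
           + cnj (- \<i> * (\<Sum>r<d j. C t l r * V j t r a)) * V j t l b) = 0"
        unfolding sum.distrib e1 e2 e3 by simp
      then show ?thesis using d1 by simp
    qed
    obtain c where c: "\<And>x. x \<in> {0..T} \<Longrightarrow> (\<Sum>l<d j. cnj (V j x l a) * V j x l b) = c"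
      using has_vector_derivative_zero_constant[of "{0..T}", OF convex_real_interval(5) der] by metis
    have "(\<Sum>l<d j. cnj (V j 0 l a) * V j 0 l b) = (\<Sum>l<d j. if l = a then (if a = b then 1 else 0) else 0)"
      using V_init j a b by (intro sum.cong) auto
    also have "\<dots> = (if a = b then 1 else 0)" using a by simp
    finally show ?thesis using c[of 0] c[of T] T_pos by simp
  qed
  have Gcol: "\<forall>a<d j. \<forall>b<d j. (\<Sum>l<d j. cnj (G l a) * G l b) = (if a = b then 1 else 0)"
  proof (intro allI impI)
    fix a b assume a: "a < d j" and b: "b < d j"
    have "(\<Sum>l<d j. cnj (G l a) * G l b)
       = (\<Sum>l<d j. cinner (U 0 T *v y T a) (psi j l) * cinner (psi j l) (U 0 T *v y T b))"
      unfolding G_def by (simp add: cinner_cnj)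
    also have "\<dots> = cinner (U 0 T *v y T a) (U 0 T *v y T b)"
      by (rule onb_parseval_l[OF onbE xT, symmetric])
    also have "\<dots> = cinner (y T a) (y T b)" by (rule cinner_unitary[OF Uun])
    also have "\<dots> = (\<Sum>l<d j. cinner (y T a) (psi j l) * cinner (psi j l) (y T b))"
      by (rule onb_parseval_l[OF onbE yE])
    also have "\<dots> = (\<Sum>l<d j. cnj (V j T l a) * V j T l b)"
      by (intro sum.cong refl) (metis cinner_cnj ycoef lessThan_iff)
    also have "\<dots> = (if a = b then 1 else 0)" by (rule VV[OF a b])
    finally show "(\<Sum>l<d j. cnj (G l a) * G l b) = (if a = b then 1 else 0)" .
  qed
  have Gunit: "unitary_sq (d j) G"
    unfolding unitary_sq_def using Gcol col_to_row[OF Gcol] by blast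
  have main: "(\<lambda>m. \<i>^m * dyson_iter (\<lambda>t a b. \<i> * cinner (psibar t a)
                     (vector_derivative (\<lambda>s. psibar s b) (at t within {0..T}))) (d j) m T a0 b0) sums G a0 b0"
    if h1: "\<forall>t\<in>{0..T}. is_onb (d j) (psibar t) (op_range (U 0 t ** E j ** U t 0))"
    and h2: "\<forall>k<d j. \<exists>D. (\<forall>t\<in>{0..T}. ((\<lambda>s. psibar s k) has_vector_derivative D t) (at t within {0..T}))
                        \<and> continuous_on {0..T} D"
    and h3: "\<forall>k<d j. psibar T k = psi j k \<and> psibar 0 k = psi j k"
    and a0: "a0 < d j" and b0: "b0 < d j"
    for psibar :: "real \<Rightarrow> nat \<Rightarrow> complex^'n" and a0 b0
  proof -
    have "\<forall>k\<in>{..<d j}. \<exists>D. (\<forall>t\<in>{0..T}. ((\<lambda>s. psibar s k) has_vector_derivative D t) (at t within {0..T}))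
                        \<and> continuous_on {0..T} D" using h2 by auto
    then obtain DD where DD0: "\<forall>k\<in>{..<d j}. (\<forall>t\<in>{0..T}. ((\<lambda>s. psibar s k) has_vector_derivative DD k t) (at t within {0..T}))
                        \<and> continuous_on {0..T} (DD k)"
      using bchoice by metis
    have DD: "((\<lambda>s. psibar s k) has_vector_derivative DD k t) (at t within {0..T})"
      if "k < d j" "t \<in> {0..T}" for k t using DD0 that by blast
    have DDc: "continuous_on {0..T} (DD k)" if "k < d j" for k using DD0 that by blast
    have vdA: "vector_derivative (\<lambda>s. psibar s k) (at t within {0..T}) = DD k t"
      if "k < d j" "t \<in> {0..T}" for k t
      using vector_derivative_within_cbox[OF T_pos, of t "\<lambda>s. psibar s k" "DD k t"] DD[OF that] that(2)
      unfolding box_real(2) by blast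
    have pcont: "continuous_on {0..T} (\<lambda>s. psibar s k)" if "k < d j" for k
      unfolding continuous_on_eq_continuous_within
      using DD[OF that] has_vector_derivative_continuous by blast
    have orth: "cinner (psibar t m) (psibar t k) = (if m = k then 1 else 0)"
      if "t \<in> {0..T}" "m < d j" "k < d j" for t m k
      using h1 that unfolding is_onb_def by blast
    have orthd: "cinner (DD m t) (psibar t k) = - cinner (psibar t m) (DD k t)"
      if t: "t \<in> {0..T}" and m: "m < d j" and k: "k < d j" for t m k
    proof -
      have d1: "((\<lambda>s. cinner (psibar s m) (psibar s k)) has_vector_derivative
          cinner (psibar t m) (DD k t) + cinner (DD m t) (psibar t k)) (at t within {0..T})"
        by (rule bounded_bilinear.has_vector_derivative[OF bb_cinner DD[OF m t] DD[OF k t]])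
      have d2: "((\<lambda>s. cinner (psibar s m) (psibar s k)) has_vector_derivative 0) (at t within {0..T})"
        by (rule has_vector_derivative_transform[OF t _ has_vector_derivative_const[of "if m = k then 1 else 0"]])
          (use orth m k in auto)
      have "cinner (psibar t m) (DD k t) + cinner (DD m t) (psibar t k) = 0"
        using vector_derivative_unique_within_closed_interval[OF T_pos, of t] d1 d2 t
        unfolding box_real(2) by blast
      then show ?thesis by (simp add: add_eq_0_iff)
    qed
    define w where "w t a b = cinner (psibar t a) (U 0 t *v y t b)" for t a b
    let ?A = "\<lambda>t a b. \<i> * cinner (psibar t a) (vector_derivative (\<lambda>s. psibar s b) (at t within {0..T}))"
    have contA: "continuous_on {0..T} (\<lambda>t. ?A t a b)" if "a < d j" "b < d j" for a b
    proof -
      have "continuous_on {0..T} (\<lambda>t. \<i> * cinner (psibar t a) (DD b t))"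
        by (intro continuous_intros bounded_bilinear.continuous_on[OF bb_cinner] pcont DDc that)
      then show ?thesis
        by (rule continuous_on_cong[THEN iffD1, rotated 2]) (auto simp: vdA that)
    qed
    have w0: "w 0 a b = (if a = b then 1 else 0)" if "a < d j" "b < d j" for a b
      unfolding w_def using h3 that y0[OF that(2)] U_id orth[of 0 a b] T_pos by simp
    have wT: "w T a b = G a b" if "a < d j" for a b
      unfolding w_def G_def using h3 that by simp
    have wd: "((\<lambda>s. w s p q) has_vector_derivative (\<Sum>l<d j. \<i> * ?A t p l * w t l q)) (at t within {0..T})"
      if p: "p < d j" and q: "q < d j" and t: "t \<in> {0..T}" for p q t
    proof -
      define z where "z s = U s 0 *v psibar s p" for s
      define z' where "z' = U t 0 *v DD p t + cmat_scale (- \<i>) (H t ** U t 0) *v psibar t p"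
      have wz: "(\<lambda>s. w s p q) = (\<lambda>s. \<Sum>l<d j. V j s l q * cinner (z s) (psi j l))"
      proof
        fix s
        have "w s p q = cinner (adj (U 0 s) *v psibar s p) (y s q)"
          unfolding w_def by (rule cinner_mv_right)
        also have "\<dots> = (\<Sum>l<d j. V j s l q * cinner (z s) (psi j l))"
          unfolding adjU z_def y_def by (simp add: cinner_sum_right)
        finally show "w s p q = (\<Sum>l<d j. V j s l q * cinner (z s) (psi j l))" .
      qed
      have Ud: "((\<lambda>\<tau>. U \<tau> 0) has_vector_derivative cmat_scale (- \<i>) (H t ** U t 0)) (at t)"
      proof -
        have "(\<lambda>\<tau>. U \<tau> 0) differentiable (at t)" and
          e: "cmat_scale \<i> (vector_derivative (\<lambda>\<tau>. U \<tau> 0) (at t)) = H t ** U t 0"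
          using U_deriv by blast+
        then have "((\<lambda>\<tau>. U \<tau> 0) has_vector_derivative vector_derivative (\<lambda>\<tau>. U \<tau> 0) (at t)) (at t)"
          using vector_derivative_works by blast
        moreover have "vector_derivative (\<lambda>\<tau>. U \<tau> 0) (at t) = cmat_scale (- \<i>) (H t ** U t 0)"
          using cmat_scale_cancel[of "vector_derivative (\<lambda>\<tau>. U \<tau> 0) (at t)"] e by simp
        ultimately show ?thesis by simp
      qed
      have zd: "(z has_vector_derivative z') (at t within {0..T})"
        unfolding z_def z'_def
        using bounded_bilinear.has_vector_derivative[OF bb_mv has_vector_derivative_at_within[OF Ud] DD[OF p t]]
        by simp
      have zl: "((\<lambda>s. cinner (z s) (psi j l)) has_vector_derivative cinner z' (psi j l)) (at t within {0..T})" for l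
        using bounded_bilinear.has_vector_derivative[OF bb_cinner zd has_vector_derivative_const[of "psi j l"]]
        by simp
      have d1: "((\<lambda>s. w s p q) has_vector_derivative
         (\<Sum>l<d j. V j t l q * cinner z' (psi j l) + (- \<i> * (\<Sum>r<d j. C t l r * V j t r q)) * cinner (z t) (psi j l)))
         (at t within {0..T})"
        unfolding wz
        by (intro has_vector_derivative_sum bounded_bilinear.has_vector_derivative[OF bounded_bilinear_mult] zl Vd)
          (use t q in auto)
      have zE: "z t \<in> op_range (E j)"
      proof -
        obtain q0 where "psibar t p = (U 0 t ** E j ** U t 0) *v q0"
          using h1 t p unfolding is_onb_def op_range_def by blast
        then have "z t = E j *v (U t 0 *v q0)"
          unfolding z_def by (simp add: matrix_vector_mul_assoc[symmetric])
        then show ?thesis by (rule op_rangeI)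
      qed
      have xt: "U 0 t *v y t q \<in> op_range (U 0 t ** E j ** U t 0)"
        by (rule op_rangeI[where y="U 0 t *v y t q"]) (simp add: matrix_vector_mul_assoc[symmetric] Ey)
      have cz: "cinner z' (psi j l) = cinner (U t 0 *v DD p t) (psi j l) + \<i> * (\<Sum>r<d j. cinner (z t) (psi j r) * C t r l)" for l
      proof -
        have "cinner (cmat_scale (- \<i>) (H t ** U t 0) *v psibar t p) (psi j l) = \<i> * cinner (H t *v z t) (psi j l)"
          unfolding z_def by (simp add: cmat_scale_mv matrix_vector_mul_assoc[symmetric] cinner_minus_left)
        also have "\<dots> = \<i> * cinner (z t) (H t *v psi j l)"
          using H_sa by (simp add: cinner_mv_left self_adjoint_def)
        also have "\<dots> = \<i> * (\<Sum>r<d j. cinner (z t) (psi j r) * C t r l)"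
          unfolding C_def using onb_parseval_l[OF onbE zE, of "H t *v psi j l"] by (rule arg_cong)
        finally show ?thesis unfolding z'_def by (simp add: cinner_add_left)
      qed
      have first: "(\<Sum>l<d j. V j t l q * cinner (U t 0 *v DD p t) (psi j l)) = (\<Sum>l<d j. \<i> * ?A t p l * w t l q)"
      proof -
        have "(\<Sum>l<d j. V j t l q * cinner (U t 0 *v DD p t) (psi j l)) = cinner (U t 0 *v DD p t) (y t q)"
          unfolding y_def by (simp add: cinner_sum_right mult.commute)
        also have "\<dots> = cinner (DD p t) (U 0 t *v y t q)"
          by (simp add: cinner_mv_left adjU')
        also have "\<dots> = (\<Sum>l<d j. cinner (DD p t) (psibar t l) * w t l q)"
          unfolding w_def using h1 t by (intro onb_parseval_r[OF _ xt]) blast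
        also have "\<dots> = (\<Sum>l<d j. \<i> * ?A t p l * w t l q)"
          using vdA orthd p t by (intro sum.cong refl) auto
        finally show ?thesis .
      qed
      have cancel: "(\<Sum>l<d j. V j t l q * (\<i> * (\<Sum>r<d j. cinner (z t) (psi j r) * C t r l)))
          + (\<Sum>l<d j. (- \<i> * (\<Sum>r<d j. C t l r * V j t r q)) * cinner (z t) (psi j l)) = 0"
      proof -
        have "(\<Sum>l<d j. V j t l q * (\<i> * (\<Sum>r<d j. cinner (z t) (psi j r) * C t r l)))
            = \<i> * (\<Sum>l<d j. \<Sum>r<d j. V j t l q * cinner (z t) (psi j r) * C t r l)"
          by (simp add: sum_distrib_left mult_ac)
        moreover have "(\<Sum>l<d j. (- \<i> * (\<Sum>r<d j. C t l r * V j t r q)) * cinner (z t) (psi j l))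
            = - \<i> * (\<Sum>l<d j. \<Sum>r<d j. C t l r * V j t r q * cinner (z t) (psi j l))"
          by (simp add: sum_distrib_left sum_distrib_right mult_ac)
        moreover have "(\<Sum>l<d j. \<Sum>r<d j. C t l r * V j t r q * cinner (z t) (psi j l))
            = (\<Sum>l<d j. \<Sum>r<d j. V j t l q * cinner (z t) (psi j r) * C t r l)"
          by (subst sum.swap) (simp add: mult_ac)
        ultimately show ?thesis by simp
      qed
      have "(\<Sum>l<d j. V j t l q * cinner z' (psi j l) + (- \<i> * (\<Sum>r<d j. C t l r * V j t r q)) * cinner (z t) (psi j l))
          = (\<Sum>l<d j. V j t l q * cinner (U t 0 *v DD p t) (psi j l))
            + ((\<Sum>l<d j. V j t l q * (\<i> * (\<Sum>r<d j. cinner (z t) (psi j r) * C t r l)))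
            + (\<Sum>l<d j. (- \<i> * (\<Sum>r<d j. C t l r * V j t r q)) * cinner (z t) (psi j l)))"
        by (simp only: cz distrib_left sum.distrib add.assoc)
      also have "\<dots> = (\<Sum>l<d j. \<i> * ?A t p l * w t l q)"
        unfolding first cancel by simp
      finally show ?thesis using d1 by simp
    qed
    have "(\<lambda>m. \<i>^m * dyson_iter ?A (d j) m T a0 b0) sums w T a0 b0"
      by (rule dyson_sums[where A="?A" and w=w and d="d j" and T=T, OF _ contA wd w0 a0 b0])
        (use T_pos in auto)
    then show ?thesis using wT[OF a0] by simp
  qed
  show "let G = (\<lambda>a b. cinner (psi j a) (\<Sum>l<d j. V j T l b *s (U 0 T *v psi j l))) in
      unitary_sq (d j) G \<and>
      (\<forall>psibar :: real \<Rightarrow> nat \<Rightarrow> complex^'n.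
         (\<forall>t\<in>{0..T}. is_onb (d j) (psibar t) (op_range (U 0 t ** E j ** U t 0))) \<and>
         (\<forall>k<d j. \<exists>D. (\<forall>t\<in>{0..T}. ((\<lambda>s. psibar s k) has_vector_derivative D t) (at t within {0..T}))
                        \<and> continuous_on {0..T} D) \<and>
         (\<forall>k<d j. psibar T k = psi j k \<and> psibar 0 k = psi j k)
         \<longrightarrow>
         (let A = (\<lambda>t a b. \<i> * cinner (psibar t a)
                     (vector_derivative (\<lambda>s. psibar s b) (at t within {0..T}))) in
          \<forall>a<d j. \<forall>b<d j. (\<lambda>m. \<i> ^ m * dyson_iter A (d j) m T a b) sums G a b))"
    unfolding Geq Let_def
  proof (intro conjI allI impI)
    show "unitary_sq (d j) G" by (rule Gunit)
  qed (use main in blast)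
qed


end
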